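(* Let $S$ be a rectangular domain and $\bar\eta$ a flow field on $\mathbb{E}(\bar S)$. Let $E_{\mathrm{low}}$ be the set of edges $\langle y,y'\rangle$ with $y\in S$, $y'\in\partial\bar S$ and $x(y')=x(y)-1$, and let $E_{\mathrm{up}}$ be the set of such edges with $x(y')=x(y)+1$. Then $$\sum_{e\in E_{\mathrm{low}}}\eta(e)=\sum_{e\in E_{\mathrm{up}}}\eta(e)=\sum_{\ell\in C(S)}w_\eta(\ell).$$
   Context: Lattice and edges. $\tilde{\mathbb{Z}}^2=\{(t,x)\in\mathbb{Z}^2:t+x\text{ even}\}$; edges join points at distance $\sqrt2$; for a point $y=(t,x)$ write $x(y)=x$. Also: - $e^\nearrow_y=\langle(t,x),(t+1,x+1)\rangle$, - $e^\searrow_y=\langle(t,x),(t+1,x-1)\rangle$, - $e^\swarrow_y=\langle(t-1,x-1),(t,x)\rangle$, - $e^\nwarrow_y=\langle(t-1,x+1),(t,x)\rangle$. Domains. A rectangular domain is a nonempty set $S=\{(t,x)\in\tilde{\mathbb{Z}}^2: a\le t+x\le b,\ c\le t-x\le d\}$ with even integers $a\le b$, $c\le d$. $\bar S$ is $S$ together with all points joined by an edge to a point of $S$; $\partial\bar S=\bar S\setminus S$; $\mathbb{E}(\bar S)$ is the set of edges with at least one endpoint in $S$. Flow field. A flow field is $\eta(e)\ge0$, $e\in\mathbb{E}(\bar S)$, with $\eta(e^\nwarrow_y)+\eta(e^\nearrow_y)=\eta(e^\swarrow_y)+\eta(e^\searrow_y)$ for all $y\in S$; $\xi_y=\eta(e^\nearrow_y)\wedge\eta(e^\searrow_y)$.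 Association. For $y\in S$, lower edge $f_1\in\{e^\swarrow_y,e^\searrow_y\}$ with $p_1\in(0,\eta(f_1)]$, and upper edge $f_2\in\{e^\nwarrow_y,e^\nearrow_y\}$ with $p_2\in(0,\eta(f_2)]$, write $(f_1,p_1)\sim_y(f_2,p_2)$ exactly when: - Case 1: $f_1=e^\swarrow_y$, $f_2=e^\nwarrow_y$, $p_1\le\eta(f_1)\wedge\eta(f_2)$, $p_2=p_1$; - Case 2: $f_1=e^\searrow_y$, $f_2=e^\nwarrow_y$, $p_2>\eta(e^\swarrow_y)$, $p_1=p_2-\eta(e^\swarrow_y)$; - Case 3: $f_1=e^\swarrow_y$, $f_2=e^\nearrow_y$, $p_1>\eta(e^\nwarrow_y)$, $p_2=p_1-\eta(e^\nwarrow_y)$; - Case 4: $f_1=e^\searrow_y$, $f_2=e^\nearrow_y$, $p_i>\eta(f_i)-\xi_y$, $\eta(f_1)-p_1=\eta(f_2)-p_2$. Broken traces. A broken trace is $\ell=(y_0,e_1,y_1,\dots,e_n,y_n)$, $n\ge1$, with $e_i=\langle y_{i-1},y_i\rangle$, $x_i=x_{i-1}+1$, $t_i-t_{i-1}\in\{\pm1\}$. $\ell\subseteq\bar S$ means $y_0,y_n\in\bar S$, $y_1,\dots,y_{n-1}\in S$, all $e_i\in\mathbb{E}(\bar S)$. $C(S)$ is the set of $\ell\subseteq\bar S$ with $y_0,y_n\in\partial\bar S$. Weight. $w_\eta(\ell)$ is the Lebesgue measure of the set of $p_1\in(0,\eta(e_1)]$ admitting $p_i\in(0,\eta(e_i)]$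 with $(e_{i-1},p_{i-1})\sim_{y_{i-1}}(e_i,p_i)$ for $i=2,\dots,n$. *)

theory Defs
  imports "HOL-Analysis.Analysis"
begin

text \<open>Points are pairs (t, x) of integers; the first coordinate is time t,
  the second is the space coordinate x.\<close>

type_synonym point = "int \<times> int"

text \<open>An edge is represented canonically as the pair (earlier endpoint, later endpoint).\<close>
type_synonym edge = "point \<times> point"

definition Zt :: "point set" where
  "Zt = {(t, x). even (t + x)}"

definition adj :: "point \<Rightarrow> point \<Rightarrow> bool" where
  "adj p q \<longleftrightarrow> p \<in> Zt \<and> q \<in> Zt \<and> (fst p - fst q)^2 + (snd p - snd q)^2 = 2"

definition mk_edge :: "point \<Rightarrow> point \<Rightarrow> edge" where
  "mk_edge p q = (if fst p \<le> fst q then (p, q) else (q, p))"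

definition e_ne :: "point \<Rightarrow> edge" where
  "e_ne y = (case y of (t, x) \<Rightarrow> ((t, x), (t + 1, x + 1)))"
definition e_se :: "point \<Rightarrow> edge" where
  "e_se y = (case y of (t, x) \<Rightarrow> ((t, x), (t + 1, x - 1)))"
definition e_sw :: "point \<Rightarrow> edge" where
  "e_sw y = (case y of (t, x) \<Rightarrow> ((t - 1, x - 1), (t, x)))"
definition e_nw :: "point \<Rightarrow> edge" where
  "e_nw y = (case y of (t, x) \<Rightarrow> ((t - 1, x + 1), (t, x)))"

definition rect_domain :: "int \<Rightarrow> int \<Rightarrow> int \<Rightarrow> int \<Rightarrow> point set" where
  "rect_domain a b c d =
     {(t, x). (t, x) \<in> Zt \<and> a \<le> t + x \<and> t + x \<le> b \<and> c \<le> t - x \<and> t - x \<le> d}"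

definition is_rect_domain :: "point set \<Rightarrow> bool" where
  "is_rect_domain S \<longleftrightarrow> S \<noteq> {} \<and>
     (\<exists>a b c d. even a \<and> even b \<and> even c \<and> even d \<and> a \<le> b \<and> c \<le> d \<and>
        S = rect_domain a b c d)"

definition clos :: "point set \<Rightarrow> point set" where
  "clos S = S \<union> {q. \<exists>p\<in>S. adj p q}"

definition bdry :: "point set \<Rightarrow> point set" where
  "bdry S = clos S - S"

definition edges_cl :: "point set \<Rightarrow> edge set" where
  "edges_cl S = {mk_edge p q | p q. adj p q \<and> (p \<in> S \<or> q \<in> S)}"

definition flow_field :: "point set \<Rightarrow> (edge \<Rightarrow> real) \<Rightarrow> bool" where
  "flow_field S \<eta> \<longleftrightarrow> (\<forall>e\<in>edges_cl S. 0 \<le> \<eta> e) \<and>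
     (\<forall>y\<in>S. \<eta> (e_nw y) + \<eta> (e_ne y) = \<eta> (e_sw y) + \<eta> (e_se y))"

definition xi :: "(edge \<Rightarrow> real) \<Rightarrow> point \<Rightarrow> real" where
  "xi \<eta> y = min (\<eta> (e_ne y)) (\<eta> (e_se y))"

definition assoc :: "(edge \<Rightarrow> real) \<Rightarrow> point \<Rightarrow> edge \<Rightarrow> real \<Rightarrow> edge \<Rightarrow> real \<Rightarrow> bool" where
  "assoc \<eta> y f1 p1 f2 p2 \<longleftrightarrow>
     f1 \<in> {e_sw y, e_se y} \<and> 0 < p1 \<and> p1 \<le> \<eta> f1 \<and>
     f2 \<in> {e_nw y, e_ne y} \<and> 0 < p2 \<and> p2 \<le> \<eta> f2 \<and>
     ((f1 = e_sw y \<and> f2 = e_nw y \<and> p1 \<le> min (\<eta> f1) (\<eta> f2) \<and> p2 = p1) \<or>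
      (f1 = e_se y \<and> f2 = e_nw y \<and> p2 > \<eta> (e_sw y) \<and> p1 = p2 - \<eta> (e_sw y)) \<or>
      (f1 = e_sw y \<and> f2 = e_ne y \<and> p1 > \<eta> (e_nw y) \<and> p2 = p1 - \<eta> (e_nw y)) \<or>
      (f1 = e_se y \<and> f2 = e_ne y \<and> p1 > \<eta> f1 - xi \<eta> y \<and> p2 > \<eta> f2 - xi \<eta> y \<and>
         \<eta> f1 - p1 = \<eta> f2 - p2))"

text \<open>A broken trace (y_0, ..., y_n) is represented by the list of its points;
  n = length ys - 1, and the i-th edge (1 \<le> i \<le> n) is trace_edge ys i.\<close>

definition trace_edge :: "point list \<Rightarrow> nat \<Rightarrow> edge" where
  "trace_edge ys i = mk_edge (ys ! (i - 1)) (ys ! i)"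

definition broken_trace :: "point list \<Rightarrow> bool" where
  "broken_trace ys \<longleftrightarrow> length ys \<ge> 2 \<and> set ys \<subseteq> Zt \<and>
     (\<forall>i. Suc i < length ys \<longrightarrow>
        snd (ys ! Suc i) = snd (ys ! i) + 1 \<and> \<bar>fst (ys ! Suc i) - fst (ys ! i)\<bar> = 1)"

definition trace_in :: "point set \<Rightarrow> point list \<Rightarrow> bool" where
  "trace_in S ys \<longleftrightarrow> hd ys \<in> clos S \<and> last ys \<in> clos S \<and>
     (\<forall>i. 0 < i \<and> i < length ys - 1 \<longrightarrow> ys ! i \<in> S) \<and>
     (\<forall>i\<in>{1..length ys - 1}. trace_edge ys i \<in> edges_cl S)"

definition C :: "point set \<Rightarrow> point list set" where
  "C S = {ys. broken_trace ys \<and> trace_in S ys \<and> hd ys \<in> bdry S \<and> last ys \<in> bdry S}"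

definition weight :: "(edge \<Rightarrow> real) \<Rightarrow> point list \<Rightarrow> real" where
  "weight \<eta> ys = measure lebesgue
     {p1. 0 < p1 \<and> p1 \<le> \<eta> (trace_edge ys 1) \<and>
        (\<exists>p :: nat \<Rightarrow> real. p 1 = p1 \<and>
           (\<forall>i\<in>{1..length ys - 1}. 0 < p i \<and> p i \<le> \<eta> (trace_edge ys i)) \<and>
           (\<forall>i\<in>{2..length ys - 1}.
              assoc \<eta> (ys ! (i - 1)) (trace_edge ys (i - 1)) (p (i - 1)) (trace_edge ys i) (p i)))}"

definition E_low :: "point set \<Rightarrow> edge set" where
  "E_low S = {mk_edge y y' | y y'. y \<in> S \<and> y' \<in> bdry S \<and> adj y y' \<and> snd y' = snd y - 1}"

definition E_up :: "point set \<Rightarrow> edge set" where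
  "E_up S = {mk_edge y y' | y y'. y \<in> S \<and> y' \<in> bdry S \<and> adj y y' \<and> snd y' = snd y + 1}"

end

theory Submission
  imports Defs
begin
lemma sq_cases: "\<bar>u::int\<bar> = 0 \<or> \<bar>u\<bar> = 1 \<or> u^2 \<ge> 4"
proof -
  have "\<bar>u\<bar> \<ge> 2 \<Longrightarrow> u^2 \<ge> 4"
  proof -
    assume "\<bar>u\<bar> \<ge> 2"
    then have "\<bar>u\<bar>*\<bar>u\<bar> \<ge> 2*2" by (intro mult_mono) auto
    then show ?thesis by (simp add: power2_eq_square abs_mult[symmetric])
  qed
  then show ?thesis by linarith
qed
lemma sq2: "(u::int)^2 + v^2 = 2 \<longleftrightarrow> \<bar>u\<bar> = 1 \<and> \<bar>v\<bar> = 1"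
proof
  assume h: "u^2 + v^2 = 2"
  have a: "u^2 \<ge> 0" "v^2 \<ge> 0" by auto
  have b: "\<bar>u\<bar> = 0 \<Longrightarrow> u^2 = 0" "\<bar>v\<bar> = 0 \<Longrightarrow> v^2 = 0"  "\<bar>u\<bar> = 1 \<Longrightarrow> u^2 = 1" "\<bar>v\<bar> = 1 \<Longrightarrow> v^2 = 1"
    by (metis power2_abs power_one zero_power2)+
  show "\<bar>u\<bar> = 1 \<and> \<bar>v\<bar> = 1" using h a b sq_cases[of u] sq_cases[of v] by linarith
next
  assume "\<bar>u\<bar> = 1 \<and> \<bar>v\<bar> = 1"
  then show "u^2 + v^2 = 2" by (metis power2_abs power_one one_add_one)
qed

definition step :: "point \<Rightarrow> point \<Rightarrow> bool" where
  "step p q \<longleftrightarrow> adj p q \<and> snd q = snd p + 1"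

lemma Zt_iff: "(t,x) \<in> Zt \<longleftrightarrow> even (t+x)" by (simp add: Zt_def)

lemma adj_iff: "adj p q \<longleftrightarrow> p \<in> Zt \<and> q \<in> Zt \<and> \<bar>fst p - fst q\<bar> = 1 \<and> \<bar>snd p - snd q\<bar> = 1"
  unfolding adj_def using sq2 by blast

lemma adj_sym: "adj p q \<Longrightarrow> adj q p"
  unfolding adj_iff by auto

lemma adj_fst_ne: "adj p q \<Longrightarrow> fst p \<noteq> fst q"
  unfolding adj_iff by auto

lemma mk_edge_sym: "adj p q \<Longrightarrow> mk_edge p q = mk_edge q p"
  using adj_fst_ne[of p q] unfolding mk_edge_def by auto

lemma mk_edge_inj: "mk_edge p q = mk_edge p' q' \<Longrightarrow> (p = p' \<and> q = q') \<or> (p = q' \<and> q = p')"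
  unfolding mk_edge_def by (auto split: if_splits)

lemma step_up: assumes "p \<in> Zt"
  shows "step p q \<longleftrightarrow> q = (fst p + 1, snd p + 1) \<or> q = (fst p - 1, snd p + 1)"
proof -
  obtain t x where p: "p = (t,x)" by force
  obtain t' x' where q: "q = (t',x')" by force
  have e: "even (t+x)" using assms p Zt_iff by auto
  show ?thesis unfolding step_def adj_iff p q using e
    by (auto simp: Zt_iff abs_eq_iff)
qed

lemma step_down: assumes "q \<in> Zt"
  shows "step p q \<longleftrightarrow> p = (fst q - 1, snd q - 1) \<or> p = (fst q + 1, snd q - 1)"
proof -
  obtain t x where q: "q = (t,x)" by force
  obtain t' x' where p: "p = (t',x')" by force
  have e: "even (t+x)" using assms q Zt_iff by auto
  show ?thesis unfolding step_def adj_iff p q using e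
    by (auto simp: Zt_iff abs_eq_iff)
qed

lemma clos_bdry: "clos S = S \<union> bdry S" "S \<inter> bdry S = {}"
  unfolding bdry_def clos_def by auto

lemma adj_clos: "p \<in> S \<Longrightarrow> adj p q \<Longrightarrow> q \<in> clos S"
  unfolding clos_def by auto

lemma edges_at:
  "mk_edge y (fst y + 1, snd y + 1) = e_ne y"
  "mk_edge y (fst y - 1, snd y + 1) = e_nw y"
  "mk_edge (fst y - 1, snd y - 1) y = e_sw y"
  "mk_edge (fst y + 1, snd y - 1) y = e_se y"
  by (cases y; simp add: mk_edge_def e_ne_def e_nw_def e_sw_def e_se_def)+

lemma edges_distinct: "e_sw y \<noteq> e_se y" "e_nw y \<noteq> e_ne y"
  by (cases y; simp add: e_ne_def e_nw_def e_sw_def e_se_def)+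

lemma nbrs_Zt: assumes "y \<in> Zt"
  shows "(fst y + 1, snd y + 1) \<in> Zt" "(fst y - 1, snd y + 1) \<in> Zt"
        "(fst y - 1, snd y - 1) \<in> Zt" "(fst y + 1, snd y - 1) \<in> Zt"
  using assms by (cases y; auto simp: Zt_iff)+

lemma adj_nbrs: assumes "y \<in> Zt"
  shows "adj y (fst y + 1, snd y + 1)" "adj y (fst y - 1, snd y + 1)"
        "adj y (fst y - 1, snd y - 1)" "adj y (fst y + 1, snd y - 1)"
  using assms nbrs_Zt[OF assms] by (auto simp: adj_iff)

lemma adj_nbrs_set: "adj p q \<Longrightarrow> q \<in> {(fst p + 1, snd p + 1), (fst p - 1, snd p + 1), (fst p - 1, snd p - 1), (fst p + 1, snd p - 1)}"
  by (cases p; cases q; auto simp: adj_iff abs_eq_iff)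

lemma rect_props: assumes "is_rect_domain S" shows "finite S" "S \<subseteq> Zt"
proof -
  obtain a b c d where S: "S = rect_domain a b c d" using assms unfolding is_rect_domain_def by blast
  define K where "K = \<bar>a\<bar> + \<bar>b\<bar> + \<bar>c\<bar> + \<bar>d\<bar>"
  have "S \<subseteq> {-K..K} \<times> {-K..K}"
  proof
    fix p assume "p \<in> S"
    then obtain t x where p: "p = (t,x)" and h: "a \<le> t + x" "t + x \<le> b" "c \<le> t - x" "t - x \<le> d"
      unfolding S rect_domain_def by auto
    show "p \<in> {-K..K} \<times> {-K..K}" unfolding p K_def using h by auto
  qed
  then show "finite S" by (rule finite_subset) auto
  show "S \<subseteq> Zt" unfolding S rect_domain_def by auto
qed

lemma clos_finite: assumes "finite S" shows "finite (clos S)"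
proof -
  have "clos S \<subseteq> S \<union> (\<Union>p\<in>S. {(fst p + 1, snd p + 1), (fst p - 1, snd p + 1), (fst p - 1, snd p - 1), (fst p + 1, snd p - 1)})"
    unfolding clos_def using adj_nbrs_set by blast
  then show ?thesis by (rule finite_subset) (use assms in auto)
qed

lemma assoc_rep: "\<exists>lo hi s. \<forall>p p'. assoc \<eta> y f1 p f2 p' \<longleftrightarrow> lo < p \<and> p \<le> hi \<and> p' = p + s"
proof -
  note D = edges_distinct[of y]
  consider "f1 = e_sw y" "f2 = e_nw y" | "f1 = e_se y" "f2 = e_nw y" | "f1 = e_sw y" "f2 = e_ne y"
    | "f1 = e_se y" "f2 = e_ne y" | "f1 \<notin> {e_sw y, e_se y} \<or> f2 \<notin> {e_nw y, e_ne y}" by blast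
  then show ?thesis
  proof cases
    case 1
    show ?thesis
      by (rule exI[of _ 0], rule exI[of _ "min (\<eta> (e_sw y)) (\<eta> (e_nw y))"], rule exI[of _ 0])
         (use 1 D in \<open>auto simp: assoc_def\<close>)
  next
    case 2
    show ?thesis
      by (rule exI[of _ "max 0 (- \<eta> (e_sw y))"], rule exI[of _ "min (\<eta> (e_se y)) (\<eta> (e_nw y) - \<eta> (e_sw y))"], rule exI[of _ "\<eta> (e_sw y)"])
         (use 2 D in \<open>auto simp: assoc_def\<close>)
  next
    case 3
    show ?thesis
      by (rule exI[of _ "max 0 (\<eta> (e_nw y))"], rule exI[of _ "min (\<eta> (e_sw y)) (\<eta> (e_ne y) + \<eta> (e_nw y))"], rule exI[of _ "- \<eta> (e_nw y)"])
         (use 3 D in \<open>auto simp: assoc_def\<close>)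
  next
    case 4
    show ?thesis
      by (rule exI[of _ "max 0 (max (\<eta> (e_se y) - xi \<eta> y) (\<eta> (e_se y) - \<eta> (e_ne y)))"], rule exI[of _ "\<eta> (e_se y)"], rule exI[of _ "\<eta> (e_ne y) - \<eta> (e_se y)"])
         (use 4 D in \<open>auto simp: assoc_def\<close>)
  next
    case 5
    show ?thesis
      by (rule exI[of _ 0], rule exI[of _ 0], rule exI[of _ 0])
         (use 5 D in \<open>auto simp: assoc_def\<close>)
  qed
qed

lemma assoc_chars:
  "assoc \<eta> y (e_sw y) p (e_nw y) p' \<longleftrightarrow> 0 < p \<and> p \<le> \<eta> (e_sw y) \<and> p \<le> \<eta> (e_nw y) \<and> p' = p"
  "assoc \<eta> y (e_se y) p (e_nw y) p' \<longleftrightarrow> 0 < p \<and> p \<le> \<eta> (e_se y) \<and> 0 < p + \<eta> (e_sw y) \<and> p + \<eta> (e_sw y) \<le> \<eta> (e_nw y) \<and> p' = p + \<eta> (e_sw y)"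
  "assoc \<eta> y (e_sw y) p (e_ne y) p' \<longleftrightarrow> 0 < p \<and> p \<le> \<eta> (e_sw y) \<and> \<eta> (e_nw y) < p \<and> p - \<eta> (e_nw y) \<le> \<eta> (e_ne y) \<and> p' = p - \<eta> (e_nw y)"
  "assoc \<eta> y (e_se y) p (e_ne y) p' \<longleftrightarrow> 0 < p \<and> p \<le> \<eta> (e_se y) \<and> 0 < p + (\<eta> (e_ne y) - \<eta> (e_se y)) \<and> \<eta> (e_se y) - xi \<eta> y < p \<and> p' = p + (\<eta> (e_ne y) - \<eta> (e_se y))"
  using edges_distinct[of y] by (auto simp: assoc_def)

lemma assoc_part:
  assumes nn: "0 \<le> \<eta> (e_sw y)" "0 \<le> \<eta> (e_se y)" "0 \<le> \<eta> (e_nw y)" "0 \<le> \<eta> (e_ne y)"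
    and cons: "\<eta> (e_nw y) + \<eta> (e_ne y) = \<eta> (e_sw y) + \<eta> (e_se y)"
    and f1: "f1 \<in> {e_sw y, e_se y}"
  shows "\<exists>m. 0 \<le> m \<and> m \<le> \<eta> f1 \<and> (\<forall>p. (\<exists>p'. assoc \<eta> y f1 p (e_nw y) p') \<longleftrightarrow> 0 < p \<and> p \<le> m)
          \<and> (\<forall>p. (\<exists>p'. assoc \<eta> y f1 p (e_ne y) p') \<longleftrightarrow> m < p \<and> p \<le> \<eta> f1)"
proof -
  note D = edges_distinct[of y]
  from f1 show ?thesis
  proof
    assume f: "f1 = e_sw y"
    show ?thesis
      by (rule exI[of _ "min (\<eta> (e_sw y)) (\<eta> (e_nw y))"]) (use f D nn cons in \<open>auto simp: assoc_chars\<close>)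
  next
    assume "f1 \<in> {e_se y}" then have f: "f1 = e_se y" by simp
    show ?thesis
      by (rule exI[of _ "max 0 (min (\<eta> (e_se y)) (\<eta> (e_nw y) - \<eta> (e_sw y)))"]) (use f D nn cons in \<open>auto simp: assoc_chars xi_def\<close>)
  qed
qed

fun follows :: "(edge \<Rightarrow> real) \<Rightarrow> point list \<Rightarrow> real \<Rightarrow> bool" where
  "follows \<eta> (y # z # w # r) p = (0 < p \<and> p \<le> \<eta> (mk_edge y z) \<and>
      (\<exists>p'. assoc \<eta> z (mk_edge y z) p (mk_edge z w) p' \<and> follows \<eta> (z # w # r) p'))"
| "follows \<eta> [y, z] p = (0 < p \<and> p \<le> \<eta> (mk_edge y z))"
| "follows \<eta> _ p = False"

lemma follows_interval: "length ys \<ge> 2 \<Longrightarrow> \<exists>a b. \<forall>p. follows \<eta> ys p \<longleftrightarrow> a < p \<and> p \<le> b"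
proof (induction ys rule: induct_list012)
  case (3 y z zs)
  show ?case
  proof (cases zs)
    case Nil then show ?thesis by auto
  next
    case (Cons w r)
    obtain a b where ab: "\<forall>p. follows \<eta> (z # w # r) p \<longleftrightarrow> a < p \<and> p \<le> b" using 3 Cons by auto
    obtain lo hi s where r: "\<forall>p p'. assoc \<eta> z (mk_edge y z) p (mk_edge z w) p' \<longleftrightarrow> lo < p \<and> p \<le> hi \<and> p' = p + s"
      using assoc_rep by blast
    show ?thesis unfolding Cons
      by (rule exI[of _ "max 0 (max lo (a - s))"], rule exI[of _ "min (\<eta> (mk_edge y z)) (min hi (b - s))"])
         (auto simp: ab r)
  qed
qed auto

lemma follows_pos: "follows \<eta> (y # z # r) p \<Longrightarrow> 0 < p \<and> p \<le> \<eta> (mk_edge y z)"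
  by (cases r) auto

lemma trace_edge_Cons: "i \<ge> 1 \<Longrightarrow> trace_edge (y # l) (Suc i) = trace_edge l i"
  by (cases i) (auto simp: trace_edge_def)

definition Wp :: "(edge \<Rightarrow> real) \<Rightarrow> point list \<Rightarrow> real \<Rightarrow> bool" where
  "Wp \<eta> ys p1 \<longleftrightarrow> 0 < p1 \<and> p1 \<le> \<eta> (trace_edge ys 1) \<and>
        (\<exists>p :: nat \<Rightarrow> real. p 1 = p1 \<and>
           (\<forall>i\<in>{1..length ys - 1}. 0 < p i \<and> p i \<le> \<eta> (trace_edge ys i)) \<and>
           (\<forall>i\<in>{2..length ys - 1}.
              assoc \<eta> (ys ! (i - 1)) (trace_edge ys (i - 1)) (p (i - 1)) (trace_edge ys i) (p i)))"

lemma weight_Wp: "weight \<eta> ys = measure lebesgue {p. Wp \<eta> ys p}"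
  unfolding weight_def Wp_def by simp

lemma Wp_two: "Wp \<eta> [y, z] p1 \<longleftrightarrow> 0 < p1 \<and> p1 \<le> \<eta> (mk_edge y z)"
  unfolding Wp_def by (auto simp: trace_edge_def intro!: exI[of _ "\<lambda>_. p1"])

lemma Wp_Cons: "Wp \<eta> (y # z # w # r) p1 \<longleftrightarrow> 0 < p1 \<and> p1 \<le> \<eta> (mk_edge y z) \<and>
      (\<exists>p'. assoc \<eta> z (mk_edge y z) p1 (mk_edge z w) p' \<and> Wp \<eta> (z # w # r) p')"
  (is "?L \<longleftrightarrow> ?R")
proof
  assume ?L
  then obtain p where p1: "0 < p1" "p1 \<le> \<eta> (trace_edge (y # z # w # r) 1)" and p: "p 1 = p1"
    and B: "\<forall>i\<in>{1..length r + 2}. 0 < p i \<and> p i \<le> \<eta> (trace_edge (y # z # w # r) i)"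
    and A: "\<forall>i\<in>{2..length r + 2}. assoc \<eta> ((y # z # w # r) ! (i - 1)) (trace_edge (y # z # w # r) (i - 1)) (p (i - 1)) (trace_edge (y # z # w # r) i) (p i)"
    unfolding Wp_def by auto
  have te1: "trace_edge (y # z # w # r) 1 = mk_edge y z" by (simp add: trace_edge_def)
  have te2: "trace_edge (y # z # w # r) 2 = mk_edge z w" by (simp add: trace_edge_def numeral_2_eq_2)
  have a2: "assoc \<eta> z (mk_edge y z) p1 (mk_edge z w) (p 2)"
    using A[rule_format, of 2] te1 te2 p by (simp add: numeral_2_eq_2)
  have "Wp \<eta> (z # w # r) (p 2)"
    unfolding Wp_def
  proof (intro conjI exI[of _ "\<lambda>i. p (Suc i)"])
    show "0 < p 2" "p 2 \<le> \<eta> (trace_edge (z # w # r) 1)"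
      using B[rule_format, of 2] trace_edge_Cons[of 1 y "z # w # r"] by (auto simp: numeral_2_eq_2)
    show "p (Suc 1) = p 2" by (simp add: numeral_2_eq_2)
    show "\<forall>i\<in>{1..length (z # w # r) - 1}. 0 < p (Suc i) \<and> p (Suc i) \<le> \<eta> (trace_edge (z # w # r) i)"
    proof
      fix i assume i: "i \<in> {1..length (z # w # r) - 1}"
      then show "0 < p (Suc i) \<and> p (Suc i) \<le> \<eta> (trace_edge (z # w # r) i)"
        using B[rule_format, of "Suc i"] trace_edge_Cons[of i y "z # w # r"] by auto
    qed
    show "\<forall>i\<in>{2..length (z # w # r) - 1}. assoc \<eta> ((z # w # r) ! (i - 1)) (trace_edge (z # w # r) (i - 1)) (p (Suc (i - 1))) (trace_edge (z # w # r) i) (p (Suc i))"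
    proof
      fix i assume i: "i \<in> {2..length (z # w # r) - 1}"
      then have "Suc (i - 1) = i" "Suc i - 1 = i" by auto
      moreover have "(y # z # w # r) ! i = (z # w # r) ! (i - 1)" using i by (cases i) auto
      ultimately show "assoc \<eta> ((z # w # r) ! (i - 1)) (trace_edge (z # w # r) (i - 1)) (p (Suc (i - 1))) (trace_edge (z # w # r) i) (p (Suc i))"
        using A[rule_format, of "Suc i"] i trace_edge_Cons[of i y "z # w # r"] trace_edge_Cons[of "i - 1" y "z # w # r"]
        by auto
    qed
  qed
  then show ?R using p1 te1 a2 by auto
next
  assume ?R
  then obtain p' where p1: "0 < p1" "p1 \<le> \<eta> (mk_edge y z)" and a: "assoc \<eta> z (mk_edge y z) p1 (mk_edge z w) p'"
    and W: "Wp \<eta> (z # w # r) p'" by auto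
  from W obtain q where q1: "q 1 = p'"
    and B: "\<forall>i\<in>{1..length r + 1}. 0 < q i \<and> q i \<le> \<eta> (trace_edge (z # w # r) i)"
    and A: "\<forall>i\<in>{2..length r + 1}. assoc \<eta> ((z # w # r) ! (i - 1)) (trace_edge (z # w # r) (i - 1)) (q (i - 1)) (trace_edge (z # w # r) i) (q i)"
    unfolding Wp_def by auto
  have te1: "trace_edge (y # z # w # r) 1 = mk_edge y z" by (simp add: trace_edge_def)
  have te2: "trace_edge (z # w # r) 1 = mk_edge z w" by (simp add: trace_edge_def)
  show ?L unfolding Wp_def
  proof (intro conjI exI[of _ "\<lambda>i. if i \<le> 1 then p1 else q (i - 1)"])
    show "0 < p1" "p1 \<le> \<eta> (trace_edge (y # z # w # r) 1)" using p1 te1 by auto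
    show "(if 1 \<le> (1::nat) then p1 else q (1 - 1)) = p1" by simp
    show "\<forall>i\<in>{1..length (y # z # w # r) - 1}. 0 < (if i \<le> 1 then p1 else q (i - 1)) \<and>
        (if i \<le> 1 then p1 else q (i - 1)) \<le> \<eta> (trace_edge (y # z # w # r) i)"
    proof
      fix i assume i: "i \<in> {1..length (y # z # w # r) - 1}"
      show "0 < (if i \<le> 1 then p1 else q (i - 1)) \<and> (if i \<le> 1 then p1 else q (i - 1)) \<le> \<eta> (trace_edge (y # z # w # r) i)"
      proof (cases "i \<le> 1")
        case True then have "i = 1" using i by auto
        then show ?thesis using p1 te1 by auto
      next
        case False
        then obtain j where j: "i = Suc j" "j \<ge> 1" by (cases i) auto
        then show ?thesis using B[rule_format, of j] i trace_edge_Cons[of j y "z # w # r"] by auto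
      qed
    qed
    show "\<forall>i\<in>{2..length (y # z # w # r) - 1}. assoc \<eta> ((y # z # w # r) ! (i - 1)) (trace_edge (y # z # w # r) (i - 1))
        (if i - 1 \<le> 1 then p1 else q (i - 1 - 1)) (trace_edge (y # z # w # r) i) (if i \<le> 1 then p1 else q (i - 1))"
    proof
      fix i assume i: "i \<in> {2..length (y # z # w # r) - 1}"
      show "assoc \<eta> ((y # z # w # r) ! (i - 1)) (trace_edge (y # z # w # r) (i - 1))
        (if i - 1 \<le> 1 then p1 else q (i - 1 - 1)) (trace_edge (y # z # w # r) i) (if i \<le> 1 then p1 else q (i - 1))"
      proof (cases "i = 2")
        case True
        then show ?thesis using a q1 te1 te2 trace_edge_Cons[of 1 y "z # w # r"] by (simp add: numeral_2_eq_2)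
      next
        case False
        then obtain j where j: "i = Suc (Suc j)" "j \<ge> 1" using i by (cases i; cases "i - 1") auto
        have "(y # z # w # r) ! (i - 1) = (z # w # r) ! (Suc j - 1)" using j by (cases j) auto
        then show ?thesis using A[rule_format, of "Suc j"] i j trace_edge_Cons[of "Suc j" y "z # w # r"]
            trace_edge_Cons[of j y "z # w # r"] by auto
      qed
    qed
  qed
qed

lemma Wp_follows: "length ys \<ge> 2 \<Longrightarrow> Wp \<eta> ys p = follows \<eta> ys p"
proof (induction \<eta> ys p rule: follows.induct)
  case (1 \<eta> y z w r)
  then show ?case by (simp add: Wp_Cons)
next
  case (2 \<eta> y z) then show ?case by (simp add: Wp_two)
qed auto

lemma weight_follows: "length ys \<ge> 2 \<Longrightarrow> weight \<eta> ys = measure lebesgue {p. follows \<eta> ys p}"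
  using Wp_follows weight_Wp by presburger

fun good :: "point set \<Rightarrow> point list \<Rightarrow> bool" where
  "good S [] = False"
| "good S [z] = (z \<in> bdry S)"
| "good S (z # w # r) = (z \<in> S \<and> step z w \<and> good S (w # r))"

lemma all_Suc_less_Cons:
  "(\<forall>i. Suc i < length (a # l) \<longrightarrow> P i) \<longleftrightarrow> (l \<noteq> [] \<longrightarrow> P 0) \<and> (\<forall>j. Suc j < length l \<longrightarrow> P (Suc j))"
  apply (cases l)
   apply simp
  apply (auto simp: less_Suc_eq_0_disj)
  done

lemma good_iff: "good S ws \<longleftrightarrow> ws \<noteq> [] \<and> last ws \<in> bdry S \<and>
   (\<forall>i. Suc i < length ws \<longrightarrow> ws ! i \<in> S \<and> step (ws ! i) (ws ! Suc i))"
proof (induction S ws rule: good.induct)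
  case (3 S z w r)
  show ?case
    apply (subst all_Suc_less_Cons)
    using 3 by auto
qed auto


lemma step_Zt: "step p q \<Longrightarrow> p \<in> Zt \<and> q \<in> Zt"
  unfolding step_def adj_iff by auto

lemma C_char: "ys \<in> C S \<longleftrightarrow> (\<exists>y ws. ys = y # ws \<and> y \<in> bdry S \<and> ws \<noteq> [] \<and> hd ws \<in> S \<and> step y (hd ws) \<and> good S ws)"
  (is "?L \<longleftrightarrow> ?R")
proof
  assume L: ?L
  then have bt: "broken_trace ys" and ti: "trace_in S ys" and hb: "hd ys \<in> bdry S" and lb: "last ys \<in> bdry S"
    unfolding C_def by auto
  have len: "length ys \<ge> 2" using bt unfolding broken_trace_def by auto
  have stp: "step (ys ! i) (ys ! Suc i)" if "Suc i < length ys" for i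
  proof -
    have "ys ! i \<in> set ys" "ys ! Suc i \<in> set ys" using that by (simp_all add: nth_mem)
    then have "ys ! i \<in> Zt" "ys ! Suc i \<in> Zt" using bt unfolding broken_trace_def by blast+
    moreover have "snd (ys ! Suc i) = snd (ys ! i) + 1" "\<bar>fst (ys ! Suc i) - fst (ys ! i)\<bar> = 1"
      using bt that unfolding broken_trace_def by auto
    ultimately show ?thesis unfolding step_def adj_iff by auto
  qed
  have int: "ys ! i \<in> S" if "0 < i" "i < length ys - 1" for i
    using ti that unfolding trace_in_def by auto
  obtain y ws where ys: "ys = y # ws" using len by (cases ys) auto
  have ws: "ws \<noteq> []" using len ys by auto
  have len3: "length ys \<ge> 3"
  proof (rule ccontr)
    assume "\<not> length ys \<ge> 3"
    then have l2: "length ys = 2" using len by auto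
    have "trace_edge ys 1 \<in> edges_cl S" using ti l2 unfolding trace_in_def by auto
    then obtain p q where pq: "adj p q" "p \<in> S \<or> q \<in> S" "mk_edge (ys ! 0) (ys ! 1) = mk_edge p q"
      unfolding edges_cl_def trace_edge_def by auto
    have "ys ! 0 \<in> bdry S" using hb ys by simp
    moreover have "ys ! 1 \<in> bdry S"
    proof -
      have "ys \<noteq> []" using l2 by auto
      then have "last ys = ys ! 1" using l2 by (simp add: last_conv_nth)
      then show ?thesis using lb by simp
    qed
    moreover note mk_edge_inj[OF pq(3)] pq(2) clos_bdry(2)[of S]
    ultimately show False by blast
  qed
  have "hd ws \<in> S" using int[of 1] len3 ys ws by (simp add: hd_conv_nth)
  moreover have "step y (hd ws)" using stp[of 0] ys ws by (simp add: hd_conv_nth)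
  moreover have "good S ws"
    unfolding good_iff
  proof (intro conjI allI impI)
    show "ws \<noteq> []" by fact
    show "last ws \<in> bdry S" using lb ys ws by simp
    fix i assume i: "Suc i < length ws"
    show "ws ! i \<in> S" using int[of "Suc i"] i ys by auto
    show "step (ws ! i) (ws ! Suc i)" using stp[of "Suc i"] i ys by auto
  qed
  ultimately show ?R using ys ws hb by auto
next
  assume ?R
  then obtain y ws where ys: "ys = y # ws" and y: "y \<in> bdry S" and ws: "ws \<noteq> []" "hd ws \<in> S"
    and st: "step y (hd ws)" and g: "good S ws" by auto
  from g have lw: "last ws \<in> bdry S"
    and gw: "\<And>i. Suc i < length ws \<Longrightarrow> ws ! i \<in> S \<and> step (ws ! i) (ws ! Suc i)"
    unfolding good_iff by auto
  have stp: "step (ys ! i) (ys ! Suc i)" if "Suc i < length ys" for i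
  proof (cases i)
    case 0 then show ?thesis using st ys ws by (simp add: hd_conv_nth)
  next
    case (Suc j) then show ?thesis using gw[of j] that ys by auto
  qed
  have int: "ys ! i \<in> S" if h: "0 < i" "i < length ys - 1" for i
  proof -
    obtain j where j: "i = Suc j" using h by (cases i) auto
    show ?thesis
    proof (cases "Suc j < length ws")
      case True then show ?thesis using gw[of j] j ys by auto
    next
      case False then show ?thesis using h j ys by auto
    qed
  qed
  have len: "length ys \<ge> 2" using ys ws by (cases ws) auto
  have len3: "length ys \<ge> 3"
  proof (rule ccontr)
    assume "\<not> length ys \<ge> 3"
    then have "length ws = 1" using len ys by auto
    then have "hd ws = last ws" using ws by (cases ws) auto
    then show False using ws lw clos_bdry(2)[of S] by auto
  qed
  have Z: "set ys \<subseteq> Zt"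
  proof
    fix q assume "q \<in> set ys"
    then obtain k where k: "k < length ys" "q = ys ! k" by (auto simp: in_set_conv_nth)
    show "q \<in> Zt"
    proof (cases "Suc k < length ys")
      case True then show ?thesis using stp[of k] step_Zt k by auto
    next
      case False
      then obtain j where "k = Suc j" using k len by (cases k) auto
      then show ?thesis using stp[of j] step_Zt k by auto
    qed
  qed
  have bt: "broken_trace ys" unfolding broken_trace_def
  proof (intro conjI allI impI)
    show "2 \<le> length ys" "set ys \<subseteq> Zt" by fact+
    fix i assume "Suc i < length ys"
    then have "step (ys ! i) (ys ! Suc i)" by (rule stp)
    then show "snd (ys ! Suc i) = snd (ys ! i) + 1" "\<bar>fst (ys ! Suc i) - fst (ys ! i)\<bar> = 1"
      unfolding step_def adj_iff by auto
  qed
  have ti: "trace_in S ys" unfolding trace_in_def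
  proof (intro conjI ballI allI impI)
    show "hd ys \<in> clos S" using y ys clos_bdry(1)[of S] by auto
    show "last ys \<in> clos S" using lw ys ws clos_bdry(1)[of S] by auto
    fix i assume "0 < i \<and> i < length ys - 1" then show "ys ! i \<in> S" using int by auto
  next
    fix i assume i: "i \<in> {1..length ys - 1}"
    then have s: "step (ys ! (i - 1)) (ys ! i)" using stp[of "i - 1"] by auto
    have "ys ! (i - 1) \<in> S \<or> ys ! i \<in> S"
    proof (cases "i = 1")
      case True then show ?thesis using int[of 1] len3 by auto
    next
      case False then show ?thesis using int[of "i - 1"] i by auto
    qed
    then show "trace_edge ys i \<in> edges_cl S" using s unfolding trace_edge_def edges_cl_def step_def by blast
  qed
  show ?L unfolding C_def using bt ti y ys lw ws by auto
qed

lemma meas_Ioc: "measure lebesgue {p::real. a < p \<and> p \<le> b} = max 0 (b - a)"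
proof -
  have e: "{p::real. a < p \<and> p \<le> b} = {a<..b}" by auto
  show ?thesis
  proof (cases "a \<le> b")
    case True then show ?thesis unfolding e
      by (subst measure_completion) auto
  next
    case False then have "{a<..b} = {}" by auto
    with False show ?thesis unfolding e by simp
  qed
qed

lemma meas_Ioc2: "measure lebesgue {p::real. a1 < p \<and> p \<le> b1 \<and> a2 < p \<and> p \<le> b2} = max 0 (min b1 b2 - max a1 a2)"
proof -
  have "{p::real. a1 < p \<and> p \<le> b1 \<and> a2 < p \<and> p \<le> b2} = {p. max a1 a2 < p \<and> p \<le> min b1 b2}" by auto
  then show ?thesis by (simp only: meas_Ioc)
qed

lemma meas_shift:
  fixes a b \<alpha> \<beta> s :: real
  assumes F: "\<forall>q. F q \<longleftrightarrow> a < q \<and> q \<le> b"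
  shows "measure lebesgue {p. \<alpha> < p \<and> p \<le> \<beta> \<and> F (p + s)} = measure lebesgue {q. \<alpha> + s < q \<and> q \<le> \<beta> + s \<and> F q}"
proof -
  have 1: "{p. \<alpha> < p \<and> p \<le> \<beta> \<and> F (p + s)} = {p. \<alpha> < p \<and> p \<le> \<beta> \<and> a - s < p \<and> p \<le> b - s}"
    unfolding F[rule_format] by (rule Collect_cong, linarith)
  have 2: "{q. \<alpha> + s < q \<and> q \<le> \<beta> + s \<and> F q} = {q. \<alpha> + s < q \<and> q \<le> \<beta> + s \<and> a < q \<and> q \<le> b}"
    unfolding F[rule_format] by (rule Collect_cong, linarith)
  have 3: "min (\<beta> + s) b = min \<beta> (b - s) + s" "max (\<alpha> + s) a = max \<alpha> (a - s) + s"
    by (auto simp: min_def max_def)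
  show ?thesis unfolding 1 2 meas_Ioc2 3 by simp
qed

definition G :: "point set \<Rightarrow> point \<Rightarrow> point list set" where
  "G S z = {ws. ws \<noteq> [] \<and> hd ws = z \<and> good S ws}"

lemma G_bdry: assumes "z \<in> bdry S" shows "G S z = {[z]}"
proof
  show "G S z \<subseteq> {[z]}"
  proof
    fix ws assume "ws \<in> G S z"
    then obtain r where ws: "ws = z # r" "good S (z # r)" unfolding G_def by (cases ws) auto
    have "r = []"
    proof (cases r)
      case (Cons w r') then show ?thesis using ws assms clos_bdry(2)[of S] by auto
    qed simp
    then show "ws \<in> {[z]}" using ws by simp
  qed
  show "{[z]} \<subseteq> G S z" using assms unfolding G_def by simp
qed

lemma G_S: assumes "z \<in> S" "z \<in> Zt"
  shows "G S z = Cons z ` (G S (fst z + 1, snd z + 1) \<union> G S (fst z - 1, snd z + 1))"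
proof
  show "G S z \<subseteq> Cons z ` (G S (fst z + 1, snd z + 1) \<union> G S (fst z - 1, snd z + 1))"
  proof
    fix ws assume "ws \<in> G S z"
    then obtain r where ws: "ws = z # r" "good S (z # r)" unfolding G_def by (cases ws) auto
    obtain w r' where r: "r = w # r'"
      using ws assms clos_bdry(2)[of S] by (cases r) auto
    have "step z w" "good S (w # r')" using ws r by auto
    then have "w # r' \<in> G S (fst z + 1, snd z + 1) \<union> G S (fst z - 1, snd z + 1)"
      using step_up[OF assms(2)] unfolding G_def by auto
    then show "ws \<in> Cons z ` (G S (fst z + 1, snd z + 1) \<union> G S (fst z - 1, snd z + 1))"
      using ws r by blast
  qed
  show "Cons z ` (G S (fst z + 1, snd z + 1) \<union> G S (fst z - 1, snd z + 1)) \<subseteq> G S z"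
  proof
    fix ws assume "ws \<in> Cons z ` (G S (fst z + 1, snd z + 1) \<union> G S (fst z - 1, snd z + 1))"
    then obtain v where ws: "ws = z # v" and v: "v \<in> G S (fst z + 1, snd z + 1) \<union> G S (fst z - 1, snd z + 1)" by auto
    then obtain w r' where vv: "v = w # r'" unfolding G_def by (cases v) auto
    have "step z w" "good S (w # r')" using v vv step_up[OF assms(2)] unfolding G_def by auto
    then show "ws \<in> G S z" using ws vv assms unfolding G_def by auto
  qed
qed

lemma edges_at_cl: assumes "z \<in> S" "z \<in> Zt"
  shows "e_sw z \<in> edges_cl S" "e_se z \<in> edges_cl S" "e_nw z \<in> edges_cl S" "e_ne z \<in> edges_cl S"
proof -
  note A = adj_nbrs[OF assms(2)]
  have "mk_edge z (fst z - 1, snd z - 1) \<in> edges_cl S" "mk_edge z (fst z + 1, snd z - 1) \<in> edges_cl S"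
       "mk_edge z (fst z - 1, snd z + 1) \<in> edges_cl S" "mk_edge z (fst z + 1, snd z + 1) \<in> edges_cl S"
    unfolding edges_cl_def using A assms(1) by blast+
  then show "e_sw z \<in> edges_cl S" "e_se z \<in> edges_cl S" "e_nw z \<in> edges_cl S" "e_ne z \<in> edges_cl S"
    using edges_at[of z] mk_edge_sym[OF A(3)] mk_edge_sym[OF A(4)] by auto
qed


lemma arith_split:
  fixes \<alpha> \<beta> m E :: real
  assumes "0 \<le> m" "m \<le> E"
  shows "max 0 (min \<beta> E - max \<alpha> m) + max 0 (min \<beta> m - max \<alpha> 0) = max 0 (min \<beta> E - max \<alpha> 0)"
  using assms by (auto simp: max_def min_def)

lemma K_step:
  assumes IH: "\<forall>y \<alpha> \<beta>. step y w \<longrightarrow> (\<Sum>ws\<in>G S w. measure lebesgue {p. \<alpha> < p \<and> p \<le> \<beta> \<and> follows \<eta> (y # ws) p})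
                = measure lebesgue {p. \<alpha> < p \<and> p \<le> \<beta> \<and> 0 < p \<and> p \<le> \<eta> (mk_edge y w)}"
    and st: "step z w"
  shows "(\<Sum>ws\<in>G S w. measure lebesgue {p. \<alpha> < p \<and> p \<le> \<beta> \<and> follows \<eta> (y # z # ws) p})
       = measure lebesgue {p. \<alpha> < p \<and> p \<le> \<beta> \<and> (\<exists>p'. assoc \<eta> z (mk_edge y z) p (mk_edge z w) p')}"
proof -
  obtain lo hi s where r: "\<forall>p p'. assoc \<eta> z (mk_edge y z) p (mk_edge z w) p' \<longleftrightarrow> lo < p \<and> p \<le> hi \<and> p' = p + s"
    using assoc_rep by blast
  have bnd: "\<And>p p'. assoc \<eta> z (mk_edge y z) p (mk_edge z w) p' \<Longrightarrow> 0 < p \<and> p \<le> \<eta> (mk_edge y z) \<and> 0 < p' \<and> p' \<le> \<eta> (mk_edge z w)"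
    by (auto simp: assoc_def)
  define a' where "a' = max \<alpha> lo"
  define b' where "b' = min \<beta> hi"
  have ex: "\<And>p. (\<exists>p'. assoc \<eta> z (mk_edge y z) p (mk_edge z w) p') \<longleftrightarrow> lo < p \<and> p \<le> hi" using r by auto
  have lohi: "\<And>p. lo < p \<and> p \<le> hi \<Longrightarrow> 0 < p \<and> p \<le> \<eta> (mk_edge y z) \<and> 0 < p + s \<and> p + s \<le> \<eta> (mk_edge z w)"
  proof -
    fix p assume "lo < p \<and> p \<le> hi"
    then have "assoc \<eta> z (mk_edge y z) p (mk_edge z w) (p + s)" using r by blast
    then show "0 < p \<and> p \<le> \<eta> (mk_edge y z) \<and> 0 < p + s \<and> p + s \<le> \<eta> (mk_edge z w)" using bnd by blast
  qed
  have trm: "measure lebesgue {p. \<alpha> < p \<and> p \<le> \<beta> \<and> follows \<eta> (y # z # ws) p}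
      = measure lebesgue {q. a' + s < q \<and> q \<le> b' + s \<and> follows \<eta> (z # ws) q}" if wsG: "ws \<in> G S w" for ws
  proof -
    obtain r' where ws: "ws = w # r'" using wsG unfolding G_def by (cases ws) auto
    obtain a b where ab: "\<forall>q. follows \<eta> (z # ws) q \<longleftrightarrow> a < q \<and> q \<le> b"
      using follows_interval[of "z # ws" \<eta>] ws by auto
    have "{p. \<alpha> < p \<and> p \<le> \<beta> \<and> follows \<eta> (y # z # ws) p} = {p. a' < p \<and> p \<le> b' \<and> follows \<eta> (z # ws) (p + s)}"
    proof (rule Collect_cong)
      fix p
      have "follows \<eta> (y # z # ws) p \<longleftrightarrow> 0 < p \<and> p \<le> \<eta> (mk_edge y z) \<and> lo < p \<and> p \<le> hi \<and> follows \<eta> (z # ws) (p + s)"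
        unfolding ws using r by simp
      then show "(\<alpha> < p \<and> p \<le> \<beta> \<and> follows \<eta> (y # z # ws) p) \<longleftrightarrow> (a' < p \<and> p \<le> b' \<and> follows \<eta> (z # ws) (p + s))"
        using lohi[of p] unfolding a'_def b'_def by auto
    qed
    then show ?thesis using meas_shift[OF ab, of a' b' s] by simp
  qed
  have "(\<Sum>ws\<in>G S w. measure lebesgue {p. \<alpha> < p \<and> p \<le> \<beta> \<and> follows \<eta> (y # z # ws) p})
      = (\<Sum>ws\<in>G S w. measure lebesgue {q. a' + s < q \<and> q \<le> b' + s \<and> follows \<eta> (z # ws) q})"
    using trm by (rule sum.cong[OF refl])
  also have "\<dots> = measure lebesgue {q. a' + s < q \<and> q \<le> b' + s \<and> 0 < q \<and> q \<le> \<eta> (mk_edge z w)}"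
    using IH st by blast
  also have "\<dots> = measure lebesgue {p. a' < p \<and> p \<le> b' \<and> 0 < p + s \<and> p + s \<le> \<eta> (mk_edge z w)}"
    using meas_shift[of "\<lambda>q. 0 < q \<and> q \<le> \<eta> (mk_edge z w)" 0 "\<eta> (mk_edge z w)" a' b' s] by simp
  also have "{p. a' < p \<and> p \<le> b' \<and> 0 < p + s \<and> p + s \<le> \<eta> (mk_edge z w)}
      = {p. \<alpha> < p \<and> p \<le> \<beta> \<and> (\<exists>p'. assoc \<eta> z (mk_edge y z) p (mk_edge z w) p')}"
  proof (rule Collect_cong)
    fix p show "(a' < p \<and> p \<le> b' \<and> 0 < p + s \<and> p + s \<le> \<eta> (mk_edge z w)) \<longleftrightarrow> (\<alpha> < p \<and> p \<le> \<beta> \<and> (\<exists>p'. assoc \<eta> z (mk_edge y z) p (mk_edge z w) p'))"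
      using ex[of p] lohi[of p] unfolding a'_def b'_def by auto
  qed
  finally show ?thesis .
qed

definition Lprop :: "point set \<Rightarrow> (edge \<Rightarrow> real) \<Rightarrow> point \<Rightarrow> bool" where
  "Lprop S \<eta> z \<longleftrightarrow> finite (G S z) \<and> (\<forall>y \<alpha> \<beta>. step y z \<longrightarrow>
     (\<Sum>ws\<in>G S z. measure lebesgue {p. \<alpha> < p \<and> p \<le> \<beta> \<and> follows \<eta> (y # ws) p})
      = measure lebesgue {p. \<alpha> < p \<and> p \<le> \<beta> \<and> 0 < p \<and> p \<le> \<eta> (mk_edge y z)})"

lemma L_main:
  assumes fin: "finite S" and SZ: "S \<subseteq> Zt" and ff: "flow_field S \<eta>" and z: "z \<in> clos S"
  shows "Lprop S \<eta> z"
proof -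
  define B where "B = Max (snd ` clos S)"
  have fc: "finite (clos S)" using clos_finite[OF fin] .
  have Bge: "\<And>q. q \<in> clos S \<Longrightarrow> snd q \<le> B" unfolding B_def using fc by auto
  have "\<forall>z. z \<in> clos S \<longrightarrow> nat (B - snd z) = n \<longrightarrow> Lprop S \<eta> z" for n
  proof (induction n rule: less_induct)
    case (less n)
    show ?case
    proof (intro allI impI)
      fix z assume z: "z \<in> clos S" and n: "nat (B - snd z) = n"
      consider "z \<in> bdry S" | "z \<in> S" using z clos_bdry(1)[of S] by auto
      then show "Lprop S \<eta> z"
      proof cases
        case 1
        show ?thesis unfolding Lprop_def G_bdry[OF 1] by simp
      next
        case 2
        have zZ: "z \<in> Zt" using 2 SZ by auto
        define w1 where "w1 = (fst z + 1, snd z + 1)"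
        define w2 where "w2 = (fst z - 1, snd z + 1)"
        have w1c: "w1 \<in> clos S" using adj_clos[OF 2 adj_nbrs(1)[OF zZ]] w1_def by simp
        have w2c: "w2 \<in> clos S" using adj_clos[OF 2 adj_nbrs(2)[OF zZ]] w2_def by simp
        have "nat (B - snd w1) < n" using Bge[OF w1c] n w1_def by (simp add: zless_nat_conj)
        then have P1: "Lprop S \<eta> w1" using less.IH w1c by blast
        have "nat (B - snd w2) < n" using Bge[OF w2c] n w2_def by (simp add: zless_nat_conj)
        then have P2: "Lprop S \<eta> w2" using less.IH w2c by blast
        have GG: "G S z = Cons z ` (G S w1 \<union> G S w2)" using G_S[OF 2 zZ] w1_def w2_def by simp
        have fin1: "finite (G S w1)" and fin2: "finite (G S w2)" using P1 P2 unfolding Lprop_def by auto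
        have disj: "G S w1 \<inter> G S w2 = {}" unfolding G_def w1_def w2_def by auto
        have finz: "finite (G S z)" using GG fin1 fin2 by simp
        have st1: "step z w1" and st2: "step z w2" using step_up[OF zZ] w1_def w2_def by auto
        have ed1: "mk_edge z w1 = e_ne z" and ed2: "mk_edge z w2 = e_nw z" using edges_at w1_def w2_def by auto
        show ?thesis unfolding Lprop_def
        proof (intro conjI allI impI)
          show "finite (G S z)" by fact
          fix y \<alpha> \<beta> assume yz: "step y z"
          define e where "e = mk_edge y z"
          have e1: "e \<in> {e_sw z, e_se z}" using yz step_down[OF zZ, of y] edges_at[of z] unfolding e_def by auto
          note ecl = edges_at_cl[OF 2 zZ]
          have nn: "0 \<le> \<eta> (e_sw z)" "0 \<le> \<eta> (e_se z)" "0 \<le> \<eta> (e_nw z)" "0 \<le> \<eta> (e_ne z)"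
            using ff ecl unfolding flow_field_def by auto
          have cons: "\<eta> (e_nw z) + \<eta> (e_ne z) = \<eta> (e_sw z) + \<eta> (e_se z)" using ff 2 unfolding flow_field_def by auto
          obtain m where m: "0 \<le> m" "m \<le> \<eta> e"
            and Anw: "\<And>p. (\<exists>p'. assoc \<eta> z e p (e_nw z) p') \<longleftrightarrow> 0 < p \<and> p \<le> m"
            and Ane: "\<And>p. (\<exists>p'. assoc \<eta> z e p (e_ne z) p') \<longleftrightarrow> m < p \<and> p \<le> \<eta> e"
            using assoc_part[OF nn cons e1] by blast
          have IH1: "\<forall>y \<alpha> \<beta>. step y w1 \<longrightarrow> (\<Sum>ws\<in>G S w1. measure lebesgue {p. \<alpha> < p \<and> p \<le> \<beta> \<and> follows \<eta> (y # ws) p})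
                = measure lebesgue {p. \<alpha> < p \<and> p \<le> \<beta> \<and> 0 < p \<and> p \<le> \<eta> (mk_edge y w1)}"
            using P1 unfolding Lprop_def by blast
          have IH2: "\<forall>y \<alpha> \<beta>. step y w2 \<longrightarrow> (\<Sum>ws\<in>G S w2. measure lebesgue {p. \<alpha> < p \<and> p \<le> \<beta> \<and> follows \<eta> (y # ws) p})
                = measure lebesgue {p. \<alpha> < p \<and> p \<le> \<beta> \<and> 0 < p \<and> p \<le> \<eta> (mk_edge y w2)}"
            using P2 unfolding Lprop_def by blast
          have "(\<Sum>ws\<in>G S z. measure lebesgue {p. \<alpha> < p \<and> p \<le> \<beta> \<and> follows \<eta> (y # ws) p})
              = (\<Sum>ws\<in>G S w1 \<union> G S w2. measure lebesgue {p. \<alpha> < p \<and> p \<le> \<beta> \<and> follows \<eta> (y # z # ws) p})"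
            unfolding GG by (subst sum.reindex) (auto simp: inj_on_def)
          also have "\<dots> = (\<Sum>ws\<in>G S w1. measure lebesgue {p. \<alpha> < p \<and> p \<le> \<beta> \<and> follows \<eta> (y # z # ws) p})
                        + (\<Sum>ws\<in>G S w2. measure lebesgue {p. \<alpha> < p \<and> p \<le> \<beta> \<and> follows \<eta> (y # z # ws) p})"
            by (rule sum.union_disjoint[OF fin1 fin2 disj])
          also have "\<dots> = measure lebesgue {p. \<alpha> < p \<and> p \<le> \<beta> \<and> (\<exists>p'. assoc \<eta> z e p (e_ne z) p')}
                        + measure lebesgue {p. \<alpha> < p \<and> p \<le> \<beta> \<and> (\<exists>p'. assoc \<eta> z e p (e_nw z) p')}"
            using K_step[OF IH1 st1] K_step[OF IH2 st2] ed1 ed2 unfolding e_def by simp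
          also have "\<dots> = measure lebesgue {p. \<alpha> < p \<and> p \<le> \<beta> \<and> m < p \<and> p \<le> \<eta> e}
                        + measure lebesgue {p. \<alpha> < p \<and> p \<le> \<beta> \<and> 0 < p \<and> p \<le> m}"
            using Anw Ane by simp
          also have "\<dots> = measure lebesgue {p. \<alpha> < p \<and> p \<le> \<beta> \<and> 0 < p \<and> p \<le> \<eta> e}"
            unfolding meas_Ioc2 using arith_split[OF m] by simp
          finally show "(\<Sum>ws\<in>G S z. measure lebesgue {p. \<alpha> < p \<and> p \<le> \<beta> \<and> follows \<eta> (y # ws) p})
              = measure lebesgue {p. \<alpha> < p \<and> p \<le> \<beta> \<and> 0 < p \<and> p \<le> \<eta> (mk_edge y z)}"
            unfolding e_def .
        qed
      qed
    qed
  qed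
  then show ?thesis using z by blast
qed

lemma sum_E_low:
  assumes "S \<subseteq> Zt"
  shows "(\<Sum>e\<in>E_low S. \<eta> e) = (\<Sum>(w,y)\<in>{(w,y). w \<in> bdry S \<and> y \<in> S \<and> step w y}. \<eta> (mk_edge w y))"
proof -
  let ?D = "{(w,y). w \<in> bdry S \<and> y \<in> S \<and> step w y}"
  have E: "E_low S = (\<lambda>(w,y). mk_edge w y) ` ?D"
  proof
    show "E_low S \<subseteq> (\<lambda>(w,y). mk_edge w y) ` ?D"
    proof
      fix e assume "e \<in> E_low S"
      then obtain y y' where h: "e = mk_edge y y'" "y \<in> S" "y' \<in> bdry S" "adj y y'" "snd y' = snd y - 1"
        unfolding E_low_def by auto
      have "step y' y" unfolding step_def using h adj_sym by auto
      moreover have "e = mk_edge y' y" using h mk_edge_sym by auto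
      ultimately show "e \<in> (\<lambda>(w,y). mk_edge w y) ` ?D" using h by auto
    qed
    show "(\<lambda>(w,y). mk_edge w y) ` ?D \<subseteq> E_low S"
    proof
      fix e assume "e \<in> (\<lambda>(w,y). mk_edge w y) ` ?D"
      then obtain w y where h: "e = mk_edge w y" "w \<in> bdry S" "y \<in> S" "step w y" by auto
      have a: "adj y w" using h adj_sym unfolding step_def by auto
      have "e = mk_edge y w" using h mk_edge_sym a by auto
      have "snd w = snd y - 1" using h unfolding step_def by auto
      then show "e \<in> E_low S" unfolding E_low_def using h a \<open>e = mk_edge y w\<close> by blast
    qed
  qed
  have inj: "inj_on (\<lambda>(w,y). mk_edge w y) ?D"
  proof (rule inj_onI)
    fix a b assume a: "a \<in> ?D" and b: "b \<in> ?D" and eq: "(\<lambda>(w,y). mk_edge w y) a = (\<lambda>(w,y). mk_edge w y) b"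
    obtain w y w' y' where ab: "a = (w,y)" "b = (w',y')" by (cases a; cases b) auto
    have "(w = w' \<and> y = y') \<or> (w = y' \<and> y = w')" using mk_edge_inj eq ab by auto
    then show "a = b" using a b ab clos_bdry(2)[of S] by auto
  qed
  show ?thesis unfolding E by (subst sum.reindex[OF inj]) (simp add: case_prod_unfold)
qed

lemma sum_E_up:
  assumes "S \<subseteq> Zt"
  shows "(\<Sum>e\<in>E_up S. \<eta> e) = (\<Sum>(y,w)\<in>{(y,w). y \<in> S \<and> w \<in> bdry S \<and> step y w}. \<eta> (mk_edge y w))"
proof -
  let ?D = "{(y,w). y \<in> S \<and> w \<in> bdry S \<and> step y w}"
  have E: "E_up S = (\<lambda>(y,w). mk_edge y w) ` ?D"
  proof
    show "E_up S \<subseteq> (\<lambda>(y,w). mk_edge y w) ` ?D"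
    proof
      fix e assume "e \<in> E_up S"
      then obtain y y' where h: "e = mk_edge y y'" "y \<in> S" "y' \<in> bdry S" "adj y y'" "snd y' = snd y + 1"
        unfolding E_up_def by auto
      have "step y y'" unfolding step_def using h by auto
      then show "e \<in> (\<lambda>(y,w). mk_edge y w) ` ?D" using h by auto
    qed
    show "(\<lambda>(y,w). mk_edge y w) ` ?D \<subseteq> E_up S"
    proof
      fix e assume "e \<in> (\<lambda>(y,w). mk_edge y w) ` ?D"
      then obtain w y where h: "e = mk_edge y w" "y \<in> S" "w \<in> bdry S" "step y w" by auto
      then have "adj y w" "snd w = snd y + 1" unfolding step_def by auto
      then show "e \<in> E_up S" unfolding E_up_def using h by blast
    qed
  qed
  have inj: "inj_on (\<lambda>(y,w). mk_edge y w) ?D"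
  proof (rule inj_onI)
    fix a b assume a: "a \<in> ?D" and b: "b \<in> ?D" and eq: "(\<lambda>(y,w). mk_edge y w) a = (\<lambda>(y,w). mk_edge y w) b"
    obtain w y w' y' where ab: "a = (y,w)" "b = (y',w')" by (cases a; cases b) auto
    have "(w = w' \<and> y = y') \<or> (w = y' \<and> y = w')" using mk_edge_inj[of y w y' w'] eq ab by auto
    then show "a = b" using a b ab clos_bdry(2)[of S] by auto
  qed
  show ?thesis unfolding E by (subst sum.reindex[OF inj]) (simp add: case_prod_unfold)
qed

lemma flow_balance:
  assumes fin: "finite S" and SZ: "S \<subseteq> Zt" and ff: "flow_field S \<eta>"
  shows "(\<Sum>(y,w)\<in>{(y,w). y \<in> S \<and> w \<in> bdry S \<and> step y w}. \<eta> (mk_edge y w))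
       = (\<Sum>(w,y)\<in>{(w,y). w \<in> bdry S \<and> y \<in> S \<and> step w y}. \<eta> (mk_edge w y))"
proof -
  have fc: "finite (clos S)" using clos_finite[OF fin] .
  have Sc: "S \<subseteq> clos S" unfolding clos_def by auto
  have cl1: "\<And>y w. y \<in> S \<Longrightarrow> step y w \<Longrightarrow> w \<in> clos S" using adj_clos unfolding step_def by blast
  have cl2: "\<And>y w. y \<in> S \<Longrightarrow> step w y \<Longrightarrow> w \<in> clos S" using adj_clos adj_sym unfolding step_def by blast
  define f where "f = (\<lambda>(y,w). \<eta> (mk_edge y w))"
  define g where "g = (\<lambda>(y,w). \<eta> (mk_edge w y))"
  define Up where "Up = Sigma S (\<lambda>y. {w. step y w})"
  define Dw where "Dw = Sigma S (\<lambda>y. {w. step w y})"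
  define I where "I = {(y,w). y \<in> S \<and> w \<in> S \<and> step y w}"
  define I' where "I' = {(y,w). y \<in> S \<and> w \<in> S \<and> step w y}"
  define Ub where "Ub = {(y,w). y \<in> S \<and> w \<in> bdry S \<and> step y w}"
  define Dn where "Dn = {(w,y). w \<in> bdry S \<and> y \<in> S \<and> step w y}"
  define Dn' where "Dn' = {(y,w). y \<in> S \<and> w \<in> bdry S \<and> step w y}"
  have finCC: "finite (clos S \<times> clos S)" using fc by simp
  have "Up \<subseteq> clos S \<times> clos S" unfolding Up_def using Sc cl1 by blast
  then have fUp: "finite Up" using finCC finite_subset by blast
  have "Dw \<subseteq> clos S \<times> clos S" unfolding Dw_def using Sc cl2 by blast
  then have fDw: "finite Dw" using finCC finite_subset by blast
  have "I \<subseteq> clos S \<times> clos S" unfolding I_def using Sc by blast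
  then have fI: "finite I" using finCC finite_subset by blast
  have "I' \<subseteq> clos S \<times> clos S" unfolding I'_def using Sc by blast
  then have fI': "finite I'" using finCC finite_subset by blast
  have "Ub \<subseteq> clos S \<times> clos S" unfolding Ub_def using Sc clos_bdry(1)[of S] by blast
  then have fUb: "finite Ub" using finCC finite_subset by blast
  have "Dn' \<subseteq> clos S \<times> clos S" unfolding Dn'_def using Sc clos_bdry(1)[of S] by blast
  then have fDn': "finite Dn'" using finCC finite_subset by blast
  have up2: "\<And>y. y \<in> S \<Longrightarrow> {w. step y w} = {(fst y + 1, snd y + 1), (fst y - 1, snd y + 1)}"
    using step_up SZ by blast
  have dn2: "\<And>y. y \<in> S \<Longrightarrow> {w. step w y} = {(fst y - 1, snd y - 1), (fst y + 1, snd y - 1)}"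
    using step_down SZ by blast
  have "sum f Up = (\<Sum>y\<in>S. \<Sum>w\<in>{w. step y w}. f (y, w))"
    unfolding Up_def f_def by (subst sum.Sigma) (use fin up2 in auto)
  also have "\<dots> = (\<Sum>y\<in>S. \<eta> (e_ne y) + \<eta> (e_nw y))"
  proof (rule sum.cong[OF refl])
    fix y assume y: "y \<in> S"
    show "(\<Sum>w\<in>{w. step y w}. f (y, w)) = \<eta> (e_ne y) + \<eta> (e_nw y)"
      unfolding up2[OF y] f_def using edges_at[of y] by simp
  qed
  also have "\<dots> = (\<Sum>y\<in>S. \<eta> (e_sw y) + \<eta> (e_se y))"
    using ff unfolding flow_field_def by (intro sum.cong) auto
  also have "\<dots> = (\<Sum>y\<in>S. \<Sum>w\<in>{w. step w y}. g (y, w))"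
  proof (rule sum.cong[OF refl])
    fix y assume y: "y \<in> S"
    show "\<eta> (e_sw y) + \<eta> (e_se y) = (\<Sum>w\<in>{w. step w y}. g (y, w))"
      unfolding dn2[OF y] g_def using edges_at[of y] by simp
  qed
  also have "\<dots> = sum g Dw"
    unfolding Dw_def g_def by (subst sum.Sigma) (use fin dn2 in auto)
  finally have eq: "sum f Up = sum g Dw" .
  have U: "Up = I \<union> Ub" "I \<inter> Ub = {}"
    unfolding Up_def I_def Ub_def using cl1 clos_bdry[of S] by auto
  have D: "Dw = I' \<union> Dn'" "I' \<inter> Dn' = {}"
    unfolding Dw_def I'_def Dn'_def using cl2 clos_bdry[of S] by auto
  have sw: "inj_on (\<lambda>(a,b). (b,a)) X" for X :: "(point \<times> point) set" by (auto simp: inj_on_def)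
  have II: "I' = (\<lambda>(a,b). (b,a)) ` I" unfolding I_def I'_def by auto
  have DD: "Dn' = (\<lambda>(a,b). (b,a)) ` Dn" unfolding Dn_def Dn'_def by auto
  have sI: "sum g I' = sum f I"
    unfolding II by (subst sum.reindex[OF sw]) (auto simp: f_def g_def intro!: sum.cong)
  have sD: "sum g Dn' = (\<Sum>(w,y)\<in>Dn. \<eta> (mk_edge w y))"
    unfolding DD by (subst sum.reindex[OF sw]) (auto simp: g_def intro!: sum.cong)
  have "sum f I + sum f Ub = sum g I' + sum g Dn'"
    using eq U D fI fUb fI' fDn' by (simp add: sum.union_disjoint)
  then have "sum f Ub = sum g Dn'" using sI by simp
  then show ?thesis using sD unfolding f_def Ub_def Dn_def by simp
qed

lemma sum_C:
  assumes fin: "finite S" and SZ: "S \<subseteq> Zt" and ff: "flow_field S \<eta>"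
  shows "(\<Sum>l\<in>C S. weight \<eta> l) = (\<Sum>(w,y)\<in>{(w,y). w \<in> bdry S \<and> y \<in> S \<and> step w y}. \<eta> (mk_edge w y))"
proof -
  define D where "D = {(w,y). w \<in> bdry S \<and> y \<in> S \<and> step w y}"
  define Sg where "Sg = (SIGMA wy:D. G S (snd wy))"
  have fc: "finite (clos S)" using clos_finite[OF fin] .
  have Sc: "S \<subseteq> clos S" unfolding clos_def by auto
  have "D \<subseteq> clos S \<times> clos S" unfolding D_def using Sc clos_bdry(1)[of S] by blast
  then have fD: "finite D" using fc finite_subset by blast
  have fG: "\<And>y. y \<in> S \<Longrightarrow> finite (G S y)" using L_main[OF fin SZ ff] Sc unfolding Lprop_def by blast
  have CS: "C S = (\<lambda>(wy, ws). fst wy # ws) ` Sg"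
  proof
    show "C S \<subseteq> (\<lambda>(wy, ws). fst wy # ws) ` Sg"
    proof
      fix l assume "l \<in> C S"
      then obtain y ws where h: "l = y # ws" "y \<in> bdry S" "ws \<noteq> []" "hd ws \<in> S" "step y (hd ws)" "good S ws"
        unfolding C_char by blast
      have "((y, hd ws), ws) \<in> Sg" unfolding Sg_def D_def G_def using h by auto
      then show "l \<in> (\<lambda>(wy, ws). fst wy # ws) ` Sg" using h(1) by force
    qed
    show "(\<lambda>(wy, ws). fst wy # ws) ` Sg \<subseteq> C S"
    proof
      fix l assume "l \<in> (\<lambda>(wy, ws). fst wy # ws) ` Sg"
      then obtain w y ws where h: "l = w # ws" "(w,y) \<in> D" "ws \<in> G S y" unfolding Sg_def by auto
      then show "l \<in> C S" unfolding C_char D_def G_def by auto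
    qed
  qed
  have inj: "inj_on (\<lambda>(wy, ws). fst wy # ws) Sg"
  proof (rule inj_onI)
    fix a b assume a: "a \<in> Sg" and b: "b \<in> Sg" and eq: "(\<lambda>(wy, ws). fst wy # ws) a = (\<lambda>(wy, ws). fst wy # ws) b"
    obtain w y ws where a': "a = ((w,y),ws)" by (cases a) auto
    obtain w' y' ws' where b': "b = ((w',y'),ws')" by (cases b) auto
    have "w = w'" "ws = ws'" using eq a' b' by auto
    moreover have "hd ws = y" "hd ws' = y'" using a b a' b' unfolding Sg_def G_def by auto
    ultimately show "a = b" using a' b' by simp
  qed
  have "(\<Sum>l\<in>C S. weight \<eta> l) = (\<Sum>(wy, ws)\<in>Sg. weight \<eta> (fst wy # ws))"
    unfolding CS by (subst sum.reindex[OF inj]) (simp add: case_prod_unfold)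
  also have "\<dots> = (\<Sum>wy\<in>D. \<Sum>ws\<in>G S (snd wy). weight \<eta> (fst wy # ws))"
    unfolding Sg_def by (subst sum.Sigma) (use fD fG D_def in auto)
  also have "\<dots> = (\<Sum>(w,y)\<in>D. \<eta> (mk_edge w y))"
  proof (rule sum.cong[OF refl])
    fix wy assume wy: "wy \<in> D"
    obtain w y where wy': "wy = (w,y)" by (cases wy) auto
    have h: "w \<in> bdry S" "y \<in> S" "step w y" using wy wy' D_def by auto
    define E where "E = \<eta> (mk_edge w y)"
    have "mk_edge w y \<in> edges_cl S" unfolding edges_cl_def using h unfolding step_def by blast
    then have E0: "0 \<le> E" using ff unfolding flow_field_def E_def by auto
    have LL: "(\<Sum>ws\<in>G S y. measure lebesgue {p. 0 < p \<and> p \<le> E \<and> follows \<eta> (w # ws) p})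
        = measure lebesgue {p. 0 < p \<and> p \<le> E \<and> 0 < p \<and> p \<le> \<eta> (mk_edge w y)}"
      using L_main[OF fin SZ ff, of y] Sc h unfolding Lprop_def by blast
    have "(\<Sum>ws\<in>G S y. weight \<eta> (w # ws)) = (\<Sum>ws\<in>G S y. measure lebesgue {p. 0 < p \<and> p \<le> E \<and> follows \<eta> (w # ws) p})"
    proof (rule sum.cong[OF refl])
      fix ws assume "ws \<in> G S y"
      then obtain r where ws: "ws = y # r" unfolding G_def by (cases ws) auto
      have "weight \<eta> (w # ws) = measure lebesgue {p. follows \<eta> (w # ws) p}"
        using weight_follows[of "w # ws" \<eta>] ws by simp
      also have "{p. follows \<eta> (w # ws) p} = {p. 0 < p \<and> p \<le> E \<and> follows \<eta> (w # ws) p}"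
        using follows_pos[of \<eta> w y r] ws E_def by auto
      finally show "weight \<eta> (w # ws) = measure lebesgue {p. 0 < p \<and> p \<le> E \<and> follows \<eta> (w # ws) p}" .
    qed
    also have "\<dots> = E" using LL unfolding meas_Ioc2 E_def[symmetric] using E0 by simp
    finally show "(\<Sum>ws\<in>G S (snd wy). weight \<eta> (fst wy # ws)) = (case wy of (w,y) \<Rightarrow> \<eta> (mk_edge w y))"
      using wy' E_def by simp
  qed
  finally show ?thesis unfolding D_def .
qed

theorem mainTheorem10:
  fixes S :: "point set" and \<eta> :: "edge \<Rightarrow> real"
  assumes "is_rect_domain S"
    and "flow_field S \<eta>"
  shows "(\<Sum>e\<in>E_low S. \<eta> e) = (\<Sum>e\<in>E_up S. \<eta> e) \<and>
         (\<Sum>e\<in>E_up S. \<eta> e) = (\<Sum>l\<in>C S. weight \<eta> l)"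
proof -
  note R = rect_props[OF assms(1)]
  show ?thesis
    using sum_E_low[OF R(2), of \<eta>] sum_E_up[OF R(2), of \<eta>] flow_balance[OF R(1) R(2) assms(2)]
      sum_C[OF R(1) R(2) assms(2)] by simp
qed

end
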